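(* For finite groups $G$ and $H$, $P_e(G)\cong P_e(H)$ if and only if $C(G)\cong C(H)$ and $|G|=|H|$.
   Context: All groups are finite. For a group $X$, the enhanced power graph $P_e(X)$ is the simple graph with vertex set $X$ in which two distinct vertices $x,y$ are adjacent if and only if $\langle x,y\rangle$ is cyclic. Let $\mathrm{Cyc}(X)=\{x\in X : \langle x,y\rangle \text{ is cyclic for all } y\in X\}$. The cyclic graph $C(X)$ is the induced subgraph of $P_e(X)$ on the vertex set $X\setminus \mathrm{Cyc}(X)$, i.e. two vertices $x,y\in X\setminus\mathrm{Cyc}(X)$ are adjacent iff $\langle x,y\rangle$ is cyclic. *)

theory Defs
  imports "HOL-Algebra.Elementary_Groups"
begin

definition enh_adj :: "('a, 'b) monoid_scheme \<Rightarrow> 'a \<Rightarrow> 'a \<Rightarrow> bool" where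
  "enh_adj G x y \<longleftrightarrow> x \<noteq> y \<and> cyclic_group (subgroup_generated G {x, y})"

definition Cyc :: "('a, 'b) monoid_scheme \<Rightarrow> 'a set" where
  "Cyc G = {x \<in> carrier G. \<forall>y \<in> carrier G. cyclic_group (subgroup_generated G {x, y})}"

definition graph_iso :: "'a set \<Rightarrow> ('a \<Rightarrow> 'a \<Rightarrow> bool) \<Rightarrow> 'b set \<Rightarrow> ('b \<Rightarrow> 'b \<Rightarrow> bool) \<Rightarrow> bool" where
  "graph_iso V E W F \<longleftrightarrow> (\<exists>f. bij_betw f V W \<and> (\<forall>x\<in>V. \<forall>y\<in>V. E x y \<longleftrightarrow> F (f x) (f y)))"

text \<open>Enhanced power graph P_e(G) has vertices carrier G, edges enh_adj G;
  cyclic graph C(G) is the induced subgraph on carrier G - Cyc G.\<close>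

end

theory Submission
  imports Defs
begin

definition domv :: "'a set \<Rightarrow> ('a \<Rightarrow> 'a \<Rightarrow> bool) \<Rightarrow> 'a set" where
  "domv V E = {x \<in> V. \<forall>y\<in>V. y \<noteq> x \<longrightarrow> E x y}"

lemma iso_dom_image:
  assumes b: "bij_betw f V W" and e: "\<forall>x\<in>V. \<forall>y\<in>V. E x y \<longleftrightarrow> F (f x) (f y)"
  shows "f ` domv V E = domv W F"
proof -
  have sj: "f ` V = W" and ij: "inj_on f V" using b by (auto simp: bij_betw_def)
  show ?thesis
  proof
    show "f ` domv V E \<subseteq> domv W F"
    proof
      fix z assume "z \<in> f ` domv V E"
      then obtain x where x: "x \<in> domv V E" and zx: "z = f x" by blast
      have xV: "x \<in> V" using x unfolding domv_def by blast
      have "F z w" if w: "w \<in> W" "w \<noteq> z" for w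
      proof -
        obtain y where yV: "y \<in> V" and wy: "w = f y" using sj w by blast
        have "y \<noteq> x" using wy zx w(2) by blast
        then have "E x y" using x yV unfolding domv_def by blast
        then show ?thesis using e xV yV zx wy by blast
      qed
      moreover have "z \<in> W" using sj xV zx by blast
      ultimately show "z \<in> domv W F" unfolding domv_def by blast
    qed
  next
    show "domv W F \<subseteq> f ` domv V E"
    proof
      fix z assume z: "z \<in> domv W F"
      then have "z \<in> W" unfolding domv_def by blast
      then obtain x where x: "x \<in> V" and zx: "z = f x" using sj by blast
      have "E x y" if y: "y \<in> V" "y \<noteq> x" for y
      proof -
        have "f y \<noteq> f x" using ij y x inj_on_contraD by metis
        moreover have "f y \<in> W" using sj y by blast
        ultimately have "F (f x) (f y)" using z zx unfolding domv_def by blast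
        then show ?thesis using e x y by blast
      qed
      then have "x \<in> domv V E" using x unfolding domv_def by blast
      then show "z \<in> f ` domv V E" using zx by blast
    qed
  qed
qed

lemma iso_restrict:
  assumes "graph_iso V E W F"
  shows "graph_iso (V - domv V E) E (W - domv W F) F"
proof -
  obtain f where b: "bij_betw f V W" and e: "\<forall>x\<in>V. \<forall>y\<in>V. E x y \<longleftrightarrow> F (f x) (f y)"
    using assms by (auto simp: graph_iso_def)
  have im: "f ` domv V E = domv W F" using iso_dom_image[OF b e] .
  have "domv V E \<subseteq> V" by (auto simp: domv_def)
  have ij: "inj_on f V" and sj: "f ` V = W" using b by (auto simp: bij_betw_def)
  have "f ` (V - domv V E) = W - domv W F"
    using inj_on_image_set_diff[OF ij, of V "domv V E"] \<open>domv V E \<subseteq> V\<close> im sj by simp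
  then have "bij_betw f (V - domv V E) (W - domv W F)"
    by (rule bij_betw_subset[OF b Diff_subset])
  moreover have "\<forall>x\<in>V - domv V E. \<forall>y\<in>V - domv V E. E x y \<longleftrightarrow> F (f x) (f y)"
    using e by simp
  ultimately show ?thesis unfolding graph_iso_def by (intro exI[of _ f]) simp
qed

lemma iso_card:
  assumes "graph_iso V E W F" shows "card V = card W"
proof -
  obtain f where "bij_betw f V W" using assms unfolding graph_iso_def by blast
  then show ?thesis by (rule bij_betw_same_card)
qed

lemma iso_extend:
  assumes fin: "finite V" "finite W" and card: "card V = card W"
    and symE: "\<And>x y. E x y \<Longrightarrow> E y x" and irrE: "\<And>x. \<not> E x x"
    and symF: "\<And>x y. F x y \<Longrightarrow> F y x" and irrF: "\<And>x. \<not> F x x"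
    and iso: "graph_iso (V - domv V E) E (W - domv W F) F"
  shows "graph_iso V E W F"
proof -
  obtain f where b: "bij_betw f (V - domv V E) (W - domv W F)"
    and e: "\<forall>x\<in>V - domv V E. \<forall>y\<in>V - domv V E. E x y \<longleftrightarrow> F (f x) (f y)"
    using iso by (auto simp: graph_iso_def)
  have sV: "domv V E \<subseteq> V" and sW: "domv W F \<subseteq> W" by (auto simp: domv_def)
  have "card (V - domv V E) = card (W - domv W F)" using b bij_betw_same_card by blast
  moreover have "card (domv V E) \<le> card V" "card (domv W F) \<le> card W"
    using fin sV sW card_mono by auto
  moreover have "card (V - domv V E) = card V - card (domv V E)"
    "card (W - domv W F) = card W - card (domv W F)"
    using fin sV sW card_Diff_subset finite_subset by metis+
  ultimately have "card (domv V E) = card (domv W F)" using card by linarith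
  moreover have "finite (domv V E)" "finite (domv W F)" using fin sV sW finite_subset by auto
  ultimately obtain g where g: "bij_betw g (domv V E) (domv W F)"
    by (metis finite_same_card_bij)
  define h where "h x = (if x \<in> domv V E then g x else f x)" for x
  have hb: "bij_betw h V W"
  proof -
    have "bij_betw h (domv V E \<union> (V - domv V E)) (domv W F \<union> (W - domv W F))"
      apply (rule bij_betw_combine)
      using g b by (auto simp: h_def intro: bij_betw_cong[THEN iffD1])
    then show ?thesis using sV sW by (simp add: Un_absorb1 Un_Diff_cancel)
  qed
  have "E x y \<longleftrightarrow> F (h x) (h y)" if x: "x \<in> V" and y: "y \<in> V" for x y
  proof (cases "x = y")
    case True then show ?thesis using irrE irrF by simp
  next
    case False
    then have hne: "h x \<noteq> h y" using hb x y by (metis bij_betw_iff_bijections)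
    have hx: "h x \<in> W" "h y \<in> W" using hb x y by (auto simp: bij_betw_def)
    show ?thesis
    proof (cases "x \<in> domv V E")
      case True
      then have "E x y" using False y by (simp add: domv_def)
      moreover have "h x \<in> domv W F" using True g by (auto simp: h_def bij_betw_def)
      then have "F (h x) (h y)" using hne hx by (simp add: domv_def)
      ultimately show ?thesis by simp
    next
      case nx: False
      show ?thesis
      proof (cases "y \<in> domv V E")
        case True
        then have "E x y" using False x symE by (auto simp: domv_def)
        moreover have "h y \<in> domv W F" using True g by (auto simp: h_def bij_betw_def)
        then have "F (h x) (h y)" using hne hx symF by (auto simp: domv_def)
        ultimately show ?thesis by simp
      next
        case ny: False
        then show ?thesis using e nx x y by (simp add: h_def)
      qed
    qed
  qed
  then show ?thesis using hb by (auto simp: graph_iso_def)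
qed

lemma Cyc_domv:
  assumes "group G"
  shows "Cyc G = domv (carrier G) (enh_adj G)"
  using group.cyclic_group_generated[OF assms]
  by (auto simp: Cyc_def domv_def enh_adj_def)

lemma enh_sym: "enh_adj G x y \<Longrightarrow> enh_adj G y x"
  by (auto simp: enh_adj_def insert_commute)

theorem lemma2:
  fixes G :: "('a, 'c) monoid_scheme" and H :: "('b, 'd) monoid_scheme"
  assumes "group G" and "finite (carrier G)" and "group H" and "finite (carrier H)"
  shows "graph_iso (carrier G) (enh_adj G) (carrier H) (enh_adj H) \<longleftrightarrow>
         (graph_iso (carrier G - Cyc G) (enh_adj G) (carrier H - Cyc H) (enh_adj H)
          \<and> card (carrier G) = card (carrier H))"
proof -
  have irr: "\<And>K x. \<not> enh_adj K x x" by (simp add: enh_adj_def)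
  show ?thesis
    unfolding Cyc_domv[OF assms(1)] Cyc_domv[OF assms(3)]
  proof
    assume a: "graph_iso (carrier G) (enh_adj G) (carrier H) (enh_adj H)"
    show "graph_iso (carrier G - domv (carrier G) (enh_adj G)) (enh_adj G)
           (carrier H - domv (carrier H) (enh_adj H)) (enh_adj H) \<and>
          card (carrier G) = card (carrier H)"
      using iso_restrict[OF a] iso_card[OF a] by blast
  next
    assume a: "graph_iso (carrier G - domv (carrier G) (enh_adj G)) (enh_adj G)
           (carrier H - domv (carrier H) (enh_adj H)) (enh_adj H) \<and>
          card (carrier G) = card (carrier H)"
    show "graph_iso (carrier G) (enh_adj G) (carrier H) (enh_adj H)"
      by (rule iso_extend[OF assms(2) assms(4) conjunct2[OF a] enh_sym irr enh_sym irr conjunct1[OF a]])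
  qed
qed

end
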